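(* Let $M$ be a graded generalized Eulerian $A_n(K)$-module and let $S\subseteq R$ be a multiplicatively closed set of homogeneous elements. Then $S^{-1}M$ is a generalized Eulerian $A_n(K)$-module. In particular $M_f$ is generalized Eulerian for every homogeneous $f\in R$.
   Context: $K$ is a field of characteristic zero, $R=K[X_1,\dots,X_n]$ standard graded, $A_n(K)$ the Weyl algebra graded by $\deg X_i=1$, $\deg\partial_i=-1$; $\mathcal E_n=\sum_iX_i\partial_i$; $|z|$ is the degree of homogeneous $z$. A graded left $A_n(K)$-module $M$ is generalized Eulerian if for every homogeneous $z\in M$ there is $a\ge1$ with $(\mathcal E_n-|z|)^az=0$. $S^{-1}M$ is graded by $|z/s|=|z|-|s|$ and is an $A_n(K)$-module via the quotient rule. *)

theory Defs
  imports Main "HOL.Vector_Spaces" "HOL-Library.Poly_Mapping"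
begin

text \<open>Polynomials are finitely supported maps from monomials (exponent vectors
  nat =>0 nat) to coefficients. A polynomial lies in R when only the variables
  X_0 ... X_(n-1) occur.\<close>

type_synonym 'k mpoly = "(nat \<Rightarrow>\<^sub>0 nat) \<Rightarrow>\<^sub>0 'k"

definition mdeg :: "(nat \<Rightarrow>\<^sub>0 nat) \<Rightarrow> nat" where
  "mdeg \<alpha> = (\<Sum>i\<in>Poly_Mapping.keys \<alpha>. Poly_Mapping.lookup \<alpha> i)"

definition in_R :: "nat \<Rightarrow> 'k::zero mpoly \<Rightarrow> bool" where
  "in_R n f \<longleftrightarrow> (\<forall>\<alpha>\<in>Poly_Mapping.keys f. Poly_Mapping.keys \<alpha> \<subseteq> {..<n})"

definition homog_poly :: "'k::zero mpoly \<Rightarrow> bool" where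
  "homog_poly f \<longleftrightarrow> (\<exists>d. \<forall>\<alpha>\<in>Poly_Mapping.keys f. mdeg \<alpha> = d)"

text \<open>Degree of a homogeneous polynomial (for 0 the value is irrelevant).\<close>
definition pdeg :: "'k::zero mpoly \<Rightarrow> nat" where
  "pdeg f = mdeg (SOME \<alpha>. \<alpha> \<in> Poly_Mapping.keys f)"

definition mult_closed :: "'k::semiring_1 mpoly set \<Rightarrow> bool" where
  "mult_closed S \<longleftrightarrow> 1 \<in> S \<and> (\<forall>s\<in>S. \<forall>t\<in>S. s * t \<in> S)"

definition pderiv_mp :: "nat \<Rightarrow> 'k::semiring_1 mpoly \<Rightarrow> 'k mpoly" where
  "pderiv_mp i f = (\<Sum>\<alpha>\<in>Poly_Mapping.keys f.
      Poly_Mapping.single (\<alpha> - Poly_Mapping.single i 1) (of_nat (Poly_Mapping.lookup \<alpha> i) * Poly_Mapping.lookup f \<alpha>))"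

definition mon_act :: "nat \<Rightarrow> (nat \<Rightarrow> 'm \<Rightarrow> 'm) \<Rightarrow> (nat \<Rightarrow>\<^sub>0 nat) \<Rightarrow> 'm \<Rightarrow> 'm" where
  "mon_act n X \<alpha> = fold (\<lambda>i g. (X i ^^ Poly_Mapping.lookup \<alpha> i) \<circ> g) [0..<n] id"

definition poly_act :: "nat \<Rightarrow> ('k::zero \<Rightarrow> 'm::comm_monoid_add \<Rightarrow> 'm) \<Rightarrow> (nat \<Rightarrow> 'm \<Rightarrow> 'm)
    \<Rightarrow> 'k mpoly \<Rightarrow> 'm \<Rightarrow> 'm" where
  "poly_act n sc X f m = (\<Sum>\<alpha>\<in>Poly_Mapping.keys f. sc (Poly_Mapping.lookup f \<alpha>) (mon_act n X \<alpha> m))"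

text \<open>An A_n(K)-module structure on the K-vector space 'm (scalar multiplication sc)
  is given by K-linear operators X i (multiplication by X_i) and D i (partial_i), i < n,
  satisfying the Weyl algebra relations. The grading (deg X_i = 1, deg partial_i = -1)
  is a family Hom d of subspaces (Hom d = M_d) whose sum is direct and equals M.\<close>

definition graded_weyl_module ::
  "nat \<Rightarrow> ('k::field \<Rightarrow> 'm::ab_group_add \<Rightarrow> 'm) \<Rightarrow> (nat \<Rightarrow> 'm \<Rightarrow> 'm) \<Rightarrow> (nat \<Rightarrow> 'm \<Rightarrow> 'm)
     \<Rightarrow> (int \<Rightarrow> 'm set) \<Rightarrow> bool" where
  "graded_weyl_module n sc X D Hom \<longleftrightarrow>
     vector_space sc \<and>
     (\<forall>i<n. Vector_Spaces.linear sc sc (X i) \<and> Vector_Spaces.linear sc sc (D i)) \<and>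
     (\<forall>i<n. \<forall>j<n. \<forall>m. X i (X j m) = X j (X i m)) \<and>
     (\<forall>i<n. \<forall>j<n. \<forall>m. D i (D j m) = D j (D i m)) \<and>
     (\<forall>i<n. \<forall>j<n. \<forall>m. D i (X j m) - X j (D i m) = (if i = j then m else 0)) \<and>
     (\<forall>d. 0 \<in> Hom d \<and> (\<forall>x\<in>Hom d. \<forall>y\<in>Hom d. x + y \<in> Hom d) \<and> (\<forall>k. \<forall>x\<in>Hom d. sc k x \<in> Hom d)) \<and>
     (\<forall>m. \<exists>!c :: int \<Rightarrow> 'm. finite {d. c d \<noteq> 0} \<and> (\<forall>d. c d \<in> Hom d) \<and>
            m = (\<Sum>d\<in>{d. c d \<noteq> 0}. c d)) \<and>
     (\<forall>i<n. \<forall>d. \<forall>m\<in>Hom d. X i m \<in> Hom (d + 1) \<and> D i m \<in> Hom (d - 1))"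

text \<open>Euler operator E_n = sum_i X_i partial_i, written with an abstract addition so that
  it applies to any module given by explicit operations.\<close>
definition euler :: "nat \<Rightarrow> ('m \<Rightarrow> 'm \<Rightarrow> 'm) \<Rightarrow> 'm \<Rightarrow> (nat \<Rightarrow> 'm \<Rightarrow> 'm) \<Rightarrow> (nat \<Rightarrow> 'm \<Rightarrow> 'm)
    \<Rightarrow> 'm \<Rightarrow> 'm" where
  "euler n add zero X D z = foldr (\<lambda>i acc. add (X i (D i z)) acc) [0..<n] zero"

definition gen_eulerian ::
  "nat \<Rightarrow> ('k::ring_1 \<Rightarrow> 'm \<Rightarrow> 'm) \<Rightarrow> ('m \<Rightarrow> 'm \<Rightarrow> 'm) \<Rightarrow> 'm \<Rightarrow> (nat \<Rightarrow> 'm \<Rightarrow> 'm)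
     \<Rightarrow> (nat \<Rightarrow> 'm \<Rightarrow> 'm) \<Rightarrow> (int \<Rightarrow> 'm set) \<Rightarrow> bool" where
  "gen_eulerian n sc add zero X D Hom \<longleftrightarrow>
     (\<forall>d. \<forall>z\<in>Hom d. \<exists>a::nat. a \<ge> 1 \<and>
        ((\<lambda>w. add (euler n add zero X D w) (sc (- of_int d) w)) ^^ a) z = zero)"

text \<open>Elements of S^{-1}M are equivalence classes of pairs (m, s), s in S, where
  (m,s) ~ (m',s') iff t (s' m - s m') = 0 for some t in S.\<close>

definition loc_rel :: "nat \<Rightarrow> ('k::zero \<Rightarrow> 'm::ab_group_add \<Rightarrow> 'm) \<Rightarrow> (nat \<Rightarrow> 'm \<Rightarrow> 'm)
    \<Rightarrow> 'k mpoly set \<Rightarrow> ('m \<times> 'k mpoly) \<Rightarrow> ('m \<times> 'k mpoly) \<Rightarrow> bool" where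
  "loc_rel n sc X S p q \<longleftrightarrow> snd p \<in> S \<and> snd q \<in> S \<and>
     (\<exists>t\<in>S. poly_act n sc X t
        (poly_act n sc X (snd q) (fst p) - poly_act n sc X (snd p) (fst q)) = 0)"

definition loc_class :: "nat \<Rightarrow> ('k::zero \<Rightarrow> 'm::ab_group_add \<Rightarrow> 'm) \<Rightarrow> (nat \<Rightarrow> 'm \<Rightarrow> 'm)
    \<Rightarrow> 'k mpoly set \<Rightarrow> ('m \<times> 'k mpoly) \<Rightarrow> ('m \<times> 'k mpoly) set" where
  "loc_class n sc X S p = {q. loc_rel n sc X S p q}"

definition loc_rep :: "('m \<times> 'k mpoly) set \<Rightarrow> 'm \<times> 'k mpoly" where
  "loc_rep c = (SOME p. p \<in> c)"

definition loc_add where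
  "loc_add n sc X S c1 c2 =
     (case loc_rep c1 of (m1, s1) \<Rightarrow> case loc_rep c2 of (m2, s2) \<Rightarrow>
        loc_class n sc X S (poly_act n sc X s2 m1 + poly_act n sc X s1 m2, s1 * s2))"

definition loc_zero where
  "loc_zero n sc X S = loc_class n sc X S (0, 1)"

definition loc_scale where
  "loc_scale n sc X S k c = (case loc_rep c of (m, s) \<Rightarrow> loc_class n sc X S (sc k m, s))"

text \<open>X_i acts on numerators; partial_i acts by the quotient rule
  partial_i (m/s) = (s partial_i m - (partial_i s) m) / s^2.\<close>
definition loc_X where
  "loc_X n sc X S i c = (case loc_rep c of (m, s) \<Rightarrow> loc_class n sc X S (X i m, s))"

definition loc_D where
  "loc_D n sc X D S i c = (case loc_rep c of (m, s) \<Rightarrow>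
      loc_class n sc X S (poly_act n sc X s (D i m) - poly_act n sc X (pderiv_mp i s) m, s * s))"

text \<open>Grading |m/s| = |m| - |s|: the degree-d part consists of the classes m/s with
  s in S and m homogeneous of degree d + |s|.\<close>
definition loc_hom where
  "loc_hom n sc X S Hom d =
     {loc_class n sc X S (m, s) | m s. s \<in> S \<and> m \<in> Hom (d + int (pdeg s))}"

definition loc_gen_eulerian ::
  "nat \<Rightarrow> ('k::field_char_0 \<Rightarrow> 'm::ab_group_add \<Rightarrow> 'm) \<Rightarrow> (nat \<Rightarrow> 'm \<Rightarrow> 'm) \<Rightarrow> (nat \<Rightarrow> 'm \<Rightarrow> 'm)
     \<Rightarrow> (int \<Rightarrow> 'm set) \<Rightarrow> 'k mpoly set \<Rightarrow> bool" where
  "loc_gen_eulerian n sc X D Hom S =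
     gen_eulerian n (loc_scale n sc X S) (loc_add n sc X S) (loc_zero n sc X S)
       (loc_X n sc X S) (loc_D n sc X D S) (loc_hom n sc X S Hom)"

end

theory Submission imports Defs begin


definition FL :: "(nat \<Rightarrow> 'm \<Rightarrow> 'm) \<Rightarrow> nat list \<Rightarrow> (nat \<Rightarrow> nat) \<Rightarrow> 'm \<Rightarrow> 'm" where
  "FL X L a = fold (\<lambda>i g. (X i ^^ a i) \<circ> g) L id"

lemma fold_gen: fixes g :: "'m \<Rightarrow> 'm" shows "fold (\<lambda>i g. (X i ^^ a i) \<circ> g) L g = fold (\<lambda>i g. (X i ^^ a i) \<circ> g) L id \<circ> g"
proof (induction L arbitrary: g)
  case Nil then show ?case by simp
next
  case (Cons x xs)
  have "fold (\<lambda>i g. (X i ^^ a i) \<circ> g) (x#xs) g = fold (\<lambda>i g. (X i ^^ a i) \<circ> g) xs ((X x ^^ a x) \<circ> g)" by simp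
  also have "\<dots> = fold (\<lambda>i g. (X i ^^ a i) \<circ> g) xs id \<circ> (X x ^^ a x) \<circ> g" using Cons[of "(X x ^^ a x) \<circ> g"] by (metis comp_assoc)
  also have "fold (\<lambda>i g. (X i ^^ a i) \<circ> g) (x#xs) id = fold (\<lambda>i g. (X i ^^ a i) \<circ> g) xs id \<circ> (X x ^^ a x)"
  proof -
    have "fold (\<lambda>i g. (X i ^^ a i) \<circ> g) (x#xs) id = fold (\<lambda>i g. (X i ^^ a i) \<circ> g) xs ((X x ^^ a x) \<circ> id)"
      by (rule List.fold_simps(2))
    also have "\<dots> = fold (\<lambda>i g. (X i ^^ a i) \<circ> g) xs id \<circ> ((X x ^^ a x) \<circ> id)" by (rule Cons)
    finally show ?thesis by (simp only: comp_id)
  qed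
  ultimately show ?case by (metis comp_assoc)
qed

lemma FL_Nil[simp]: "FL X [] a = id" by (simp add: FL_def)
lemma FL_Cons: "FL X (x#xs) a = FL X xs a \<circ> (X x ^^ a x)"
  unfolding FL_def using fold_gen[where X=X and a=a and L=xs and g="(X x ^^ a x) \<circ> id"] by simp

lemma funpow_commute_gen: "h \<circ> f = f \<circ> h \<Longrightarrow> h \<circ> (f ^^ k) = (f ^^ k) \<circ> h"
  by (induction k) (simp_all add: comp_assoc, metis comp_assoc)

lemma FL_commute: "(\<And>j. j \<in> set L \<Longrightarrow> h \<circ> (X j ^^ a j) = (X j ^^ a j) \<circ> h) \<Longrightarrow> h \<circ> FL X L a = FL X L a \<circ> h"
proof (induction L)
  case Nil then show ?case by simp
next
  case (Cons x xs)
  have "h \<circ> FL X (x#xs) a = (h \<circ> FL X xs a) \<circ> (X x ^^ a x)" by (simp add: FL_Cons comp_assoc)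
  also have "\<dots> = FL X xs a \<circ> (h \<circ> (X x ^^ a x))" using Cons by (simp add: fun_eq_iff)
  also have "\<dots> = FL X (x#xs) a \<circ> h" using Cons.prems[of x] by (simp add: FL_Cons comp_assoc fun_eq_iff)
  finally show ?case .
qed

lemma FL_zero: "(\<And>k. k \<in> set L \<Longrightarrow> a k = 0) \<Longrightarrow> FL X L a = id"
  by (induction L) (auto simp: FL_Cons)

lemma FL_single: "distinct L \<Longrightarrow> i \<in> set L \<Longrightarrow> (\<And>k. k \<in> set L \<Longrightarrow> k \<noteq> i \<Longrightarrow> a k = 0) \<Longrightarrow> FL X L a = X i ^^ a i"
proof (induction L)
  case Nil then show ?case by simp
next
  case (Cons x xs)
  show ?case
  proof (cases "x = i")
    case True
    then have "FL X xs a = id" using Cons.prems by (intro FL_zero) auto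
    then show ?thesis using True by (simp add: FL_Cons)
  next
    case False
    then have "a x = 0" using Cons.prems by auto
    then show ?thesis using Cons False by (simp add: FL_Cons)
  qed
qed

lemma FL_add:
  assumes comm: "\<And>i j. i \<in> set L \<Longrightarrow> j \<in> set L \<Longrightarrow> X i \<circ> X j = X j \<circ> X i"
  shows "FL X L (\<lambda>i. a i + b i) = FL X L a \<circ> FL X L b"
  using comm
proof (induction L)
  case Nil then show ?case by simp
next
  case (Cons x xs)
  have c1: "(X x ^^ a x) \<circ> FL X xs b = FL X xs b \<circ> (X x ^^ a x)"
  proof (rule FL_commute)
    fix j assume "j \<in> set xs"
    then have "X x \<circ> (X j ^^ b j) = (X j ^^ b j) \<circ> X x"
      using funpow_commute_gen[OF Cons.prems[of x j]] by simp
    then have "(X j ^^ b j) \<circ> (X x ^^ a x) = (X x ^^ a x) \<circ> (X j ^^ b j)"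
      by (intro funpow_commute_gen) simp
    then show "(X x ^^ a x) \<circ> (X j ^^ b j) = (X j ^^ b j) \<circ> (X x ^^ a x)" by simp
  qed
  have IH: "FL X xs (\<lambda>i. a i + b i) = FL X xs a \<circ> FL X xs b"
    by (rule Cons.IH) (use Cons.prems in auto)
  have "FL X (x#xs) (\<lambda>i. a i + b i) = FL X xs a \<circ> FL X xs b \<circ> (X x ^^ a x) \<circ> (X x ^^ b x)"
    unfolding FL_Cons IH funpow_add by (simp only: comp_assoc)
  also have "\<dots> = FL X xs a \<circ> ((X x ^^ a x) \<circ> FL X xs b) \<circ> (X x ^^ b x)"
    using c1 by (simp add: comp_assoc)
  also have "\<dots> = FL X (x#xs) a \<circ> FL X (x#xs) b" by (simp add: FL_Cons comp_assoc)
  finally show ?case .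
qed

lemma mon_act_FL: "mon_act n X \<alpha> = FL X [0..<n] (Poly_Mapping.lookup \<alpha>)"
  by (simp add: mon_act_def FL_def)




lemma additive_props:
  fixes f :: "'a::ab_group_add \<Rightarrow> 'b::ab_group_add"
  assumes add: "\<And>x y. f (x + y) = f x + f y"
  shows "f 0 = 0" "f (- x) = - f x" "f (x - y) = f x - f y" "f (sum g A) = (\<Sum>a\<in>A. f (g a))"
proof -
  show z: "f 0 = 0" using add[of 0 0] by simp
  show m: "f (- x) = - f x" using add[of x "-x"] z by (metis add.commute eq_neg_iff_add_eq_0)
  show "f (x - y) = f x - f y" using add[of x "-y"] add[of y "-y"] z
    by (metis diff_conv_add_uminus minus_add_cancel add_minus_cancel eq_neg_iff_add_eq_0 add.commute)
  show "f (sum g A) = (\<Sum>a\<in>A. f (g a))"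
    by (induction A rule: infinite_finite_induct) (simp_all add: z add)
qed

locale WM =
  fixes n :: nat and sc :: "'k::field_char_0 \<Rightarrow> 'm::ab_group_add \<Rightarrow> 'm" and X D :: "nat \<Rightarrow> 'm \<Rightarrow> 'm"
  assumes sc_add: "sc a (x + y) = sc a x + sc a y"
    and sc_ladd: "sc (a + b) x = sc a x + sc b x"
    and sc_sc: "sc a (sc b x) = sc (a * b) x"
    and sc_one: "sc 1 x = x"
    and X_add: "i < n \<Longrightarrow> X i (x + y) = X i x + X i y"
    and X_sc: "i < n \<Longrightarrow> X i (sc c x) = sc c (X i x)"
    and D_add: "i < n \<Longrightarrow> D i (x + y) = D i x + D i y"
    and D_sc: "i < n \<Longrightarrow> D i (sc c x) = sc c (D i x)"
    and XX: "i < n \<Longrightarrow> j < n \<Longrightarrow> X i (X j m) = X j (X i m)"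
    and DX: "i < n \<Longrightarrow> j < n \<Longrightarrow> D i (X j m) - X j (D i m) = (if i = j then m else 0)"
begin

lemmas sc_r = additive_props[of "sc a", OF sc_add] for a

lemma sc_zero_left[simp]: "sc 0 x = 0"
  using sc_ladd[of 0 0 x] by simp

lemma sc_minus_left: "sc (- a) x = - sc a x"
  using sc_ladd[of a "-a" x] by (metis add.commute eq_neg_iff_add_eq_0 add.right_inverse sc_zero_left)

lemma sc_diff_left: "sc (a - b) x = sc a x - sc b x"
  using sc_ladd[of a "-b" x] by (simp add: sc_minus_left)

lemma sc_sum_left: "sc (sum g A) x = (\<Sum>a\<in>A. sc (g a) x)"
  by (induction A rule: infinite_finite_induct) (simp_all add: sc_ladd)

lemma Xcomm: "i < n \<Longrightarrow> j < n \<Longrightarrow> X i \<circ> X j = X j \<circ> X i"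
  by (simp add: fun_eq_iff XX)

lemma DXcomm: "i < n \<Longrightarrow> j < n \<Longrightarrow> i \<noteq> j \<Longrightarrow> D i \<circ> X j = X j \<circ> D i"
proof (rule ext)
  fix x assume "i < n" "j < n" "i \<noteq> j"
  then show "(D i \<circ> X j) x = (X j \<circ> D i) x" using DX[of i j x] by simp
qed

lemma X_zero: "i < n \<Longrightarrow> X i 0 = 0" using X_add[of i 0 0] by simp
lemma X_minus: "i < n \<Longrightarrow> X i (- x) = - X i x"
  using X_add[of i x "-x"] X_zero[of i] by (metis add.commute eq_neg_iff_add_eq_0 add.right_inverse)
lemma X_diff: "i < n \<Longrightarrow> X i (x - y) = X i x - X i y"
  using X_add[of i x "-y"] X_minus[of i y] by simp
lemma X_sum: "i < n \<Longrightarrow> X i (sum g A) = (\<Sum>a\<in>A. X i (g a))"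
  by (induction A rule: infinite_finite_induct) (simp_all add: X_zero X_add)
lemma D_zero: "i < n \<Longrightarrow> D i 0 = 0" using D_add[of i 0 0] by simp
lemma D_minus: "i < n \<Longrightarrow> D i (- x) = - D i x"
  using D_add[of i x "-x"] D_zero[of i] by (metis add.commute eq_neg_iff_add_eq_0 add.right_inverse)
lemma D_diff: "i < n \<Longrightarrow> D i (x - y) = D i x - D i y"
  using D_add[of i x "-y"] D_minus[of i y] by simp
lemma D_sum: "i < n \<Longrightarrow> D i (sum g A) = (\<Sum>a\<in>A. D i (g a))"
  by (induction A rule: infinite_finite_induct) (simp_all add: D_zero D_add)

lemma set_upt_sub[simp]: "set [0..<n] \<subseteq> {..<n}" by auto

lemma Xpow_lin: "i < n \<Longrightarrow> (X i ^^ k) (x + y) = (X i ^^ k) x + (X i ^^ k) y"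
  "i < n \<Longrightarrow> (X i ^^ k) (sc c x) = sc c ((X i ^^ k) x)"
  by (induction k) (simp_all add: X_add X_sc)

lemma FL_lin: "set L \<subseteq> {..<n} \<Longrightarrow> FL X L a (x + y) = FL X L a x + FL X L a y"
  "set L \<subseteq> {..<n} \<Longrightarrow> FL X L a (sc c x) = sc c (FL X L a x)"
  by (induction L arbitrary: x y) (simp_all add: FL_Cons Xpow_lin)

abbreviation mon where "mon \<alpha> \<equiv> mon_act n X \<alpha>"

lemma mon_add_vec: "mon \<alpha> (x + y) = mon \<alpha> x + mon \<alpha> y"
  by (simp add: mon_act_FL FL_lin[OF set_upt_sub])

lemma mon_sc: "mon \<alpha> (sc c x) = sc c (mon \<alpha> x)"
  by (simp add: mon_act_FL FL_lin[OF set_upt_sub])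

lemmas mon_r = additive_props[of "mon \<alpha>", OF mon_add_vec] for \<alpha>

lemma mon_plus: "mon (\<alpha> + \<beta>) = mon \<alpha> \<circ> mon \<beta>"
proof -
  have "Poly_Mapping.lookup (\<alpha> + \<beta>) = (\<lambda>i. Poly_Mapping.lookup \<alpha> i + Poly_Mapping.lookup \<beta> i)"
    by (simp add: fun_eq_iff lookup_add)
  then show ?thesis unfolding mon_act_FL by (simp, subst FL_add) (auto simp: Xcomm)
qed

lemma mon_zero: "mon 0 = id"
  unfolding mon_act_FL by (rule FL_zero) simp

lemma mon_X: "j < n \<Longrightarrow> X j (mon \<alpha> m) = mon \<alpha> (X j m)"
proof -
  assume j: "j < n"
  have "X j \<circ> FL X [0..<n] (Poly_Mapping.lookup \<alpha>) = FL X [0..<n] (Poly_Mapping.lookup \<alpha>) \<circ> X j"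
    by (rule FL_commute, rule funpow_commute_gen) (use j Xcomm in auto)
  then show ?thesis unfolding mon_act_FL by (metis comp_apply)
qed

lemma mon_single: "i < n \<Longrightarrow> mon (Poly_Mapping.single i 1) = X i"
  unfolding mon_act_FL by (subst FL_single[of _ i]) (auto simp: lookup_single)

lemma mon_split: "i < n \<Longrightarrow> mon \<alpha> = FL X [0..<n] ((Poly_Mapping.lookup \<alpha>)(i := 0)) \<circ> (X i ^^ Poly_Mapping.lookup \<alpha> i)"
proof -
  assume i: "i < n"
  let ?b = "\<lambda>k. if k = i then Poly_Mapping.lookup \<alpha> i else 0"
  have e: "Poly_Mapping.lookup \<alpha> = (\<lambda>k. ((Poly_Mapping.lookup \<alpha>)(i := 0)) k + ?b k)" by auto
  have "FL X [0..<n] ?b = X i ^^ Poly_Mapping.lookup \<alpha> i" using i by (subst FL_single[of _ i]) auto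
  then show ?thesis unfolding mon_act_FL by (subst e, subst FL_add) (auto simp: Xcomm)
qed

lemma D_Xpow: "i < n \<Longrightarrow> D i ((X i ^^ k) m) = (X i ^^ k) (D i m) + sc (of_nat k) ((X i ^^ (k - 1)) m)"
proof (induction k)
  case 0 then show ?case by simp
next
  case (Suc k)
  have dx: "D i (X i w) = X i (D i w) + w" for w using DX[of i i w] Suc.prems by (simp add: algebra_simps)
  have "D i ((X i ^^ Suc k) m) = X i (D i ((X i ^^ k) m)) + (X i ^^ k) m" by (simp add: dx)
  also have "\<dots> = (X i ^^ Suc k) (D i m) + X i (sc (of_nat k) ((X i ^^ (k - 1)) m)) + (X i ^^ k) m"
    using Suc by (simp add: X_add)
  also have "X i (sc (of_nat k) ((X i ^^ (k - 1)) m)) = sc (of_nat k) ((X i ^^ k) m)"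
    using Suc.prems by (cases k) (simp_all add: X_sc X_zero)
  also have "(X i ^^ Suc k) (D i m) + sc (of_nat k) ((X i ^^ k) m) + (X i ^^ k) m
     = (X i ^^ Suc k) (D i m) + sc (of_nat (Suc k)) ((X i ^^ (Suc k - 1)) m)"
    by (simp add: sc_ladd sc_one add.assoc)
  finally show ?case .
qed

lemma D_mon: "i < n \<Longrightarrow> D i (mon \<alpha> m) = mon \<alpha> (D i m) + sc (of_nat (Poly_Mapping.lookup \<alpha> i)) (mon (\<alpha> - Poly_Mapping.single i 1) m)"
proof -
  assume i: "i < n"
  let ?\<beta> = "\<alpha> - Poly_Mapping.single i 1"
  let ?G = "FL X [0..<n] ((Poly_Mapping.lookup \<alpha>)(i := 0))"
  let ?k = "Poly_Mapping.lookup \<alpha> i"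
  have lb: "(Poly_Mapping.lookup ?\<beta>)(i := 0) = (Poly_Mapping.lookup \<alpha>)(i := 0)"
    by (auto simp: fun_eq_iff lookup_minus lookup_single)
  have lbi: "Poly_Mapping.lookup ?\<beta> i = ?k - 1" by (simp add: lookup_minus)
  have m1: "mon \<alpha> = ?G \<circ> (X i ^^ ?k)" using mon_split[OF i] .
  have m2: "mon ?\<beta> = ?G \<circ> (X i ^^ (?k - 1))" using mon_split[OF i, of ?\<beta>] lb lbi by simp
  have c: "D i \<circ> ?G = ?G \<circ> D i"
  proof (rule FL_commute)
    fix j assume "j \<in> set [0..<n]"
    then have j: "j < n" by simp
    show "D i \<circ> (X j ^^ ((Poly_Mapping.lookup \<alpha>)(i := 0)) j) = (X j ^^ ((Poly_Mapping.lookup \<alpha>)(i := 0)) j) \<circ> D i"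
    proof (cases "j = i")
      case True then show ?thesis by simp
    next
      case False then show ?thesis using DXcomm[OF i j] by (intro funpow_commute_gen) auto
    qed
  qed
  have Glin1: "?G (x + y) = ?G x + ?G y" for x y by (simp add: FL_lin[OF set_upt_sub])
  have Glin2: "?G (sc c x) = sc c (?G x)" for x c by (simp add: FL_lin[OF set_upt_sub])
  have "D i (mon \<alpha> m) = ?G (D i ((X i ^^ ?k) m))" using c m1 by (metis comp_apply)
  also have "\<dots> = mon \<alpha> (D i m) + sc (of_nat ?k) (mon ?\<beta> m)"
    using D_Xpow[OF i] m1 m2 by (simp add: Glin1 Glin2)
  finally show ?thesis .
qed

end



context WM begin

abbreviation act where "act f m \<equiv> poly_act n sc X f m"

lemma act_superset: "finite A \<Longrightarrow> Poly_Mapping.keys f \<subseteq> A \<Longrightarrow>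
   act f m = (\<Sum>\<alpha>\<in>A. sc (Poly_Mapping.lookup f \<alpha>) (mon \<alpha> m))"
  unfolding poly_act_def
  by (rule sum.mono_neutral_left) (auto simp: in_keys_iff)

lemma act_add_poly: "act (f + g) m = act f m + act g m"
proof -
  let ?A = "Poly_Mapping.keys f \<union> Poly_Mapping.keys g"
  have "act (f + g) m = (\<Sum>\<alpha>\<in>?A. sc (Poly_Mapping.lookup (f+g) \<alpha>) (mon \<alpha> m))"
    by (rule act_superset) (use keys_add[of f g] in auto)
  also have "\<dots> = (\<Sum>\<alpha>\<in>?A. sc (Poly_Mapping.lookup f \<alpha>) (mon \<alpha> m)) + (\<Sum>\<alpha>\<in>?A. sc (Poly_Mapping.lookup g \<alpha>) (mon \<alpha> m))"
    by (simp add: lookup_add sc_ladd sum.distrib)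
  also have "\<dots> = act f m + act g m"
    by (subst (1 2) act_superset[of ?A]) auto
  finally show ?thesis .
qed

lemmas act_poly_r = additive_props[of "\<lambda>f. act f m", OF act_add_poly] for m

lemma act_single: "act (Poly_Mapping.single \<alpha> c) m = sc c (mon \<alpha> m)"
  by (simp add: poly_act_def)

lemma act_add_vec: "act f (x + y) = act f x + act f y"
  by (simp add: poly_act_def mon_add_vec sc_add sum.distrib)

lemma act_sc: "act f (sc c x) = sc c (act f x)"
proof -
  have "act f (sc c x) = (\<Sum>\<alpha>\<in>Poly_Mapping.keys f. sc c (sc (Poly_Mapping.lookup f \<alpha>) (mon \<alpha> x)))"
    unfolding poly_act_def by (simp add: mon_sc sc_sc mult.commute)
  also have "\<dots> = sc c (act f x)" unfolding poly_act_def by (simp add: sc_r(4))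
  finally show ?thesis .
qed

lemmas act_vec_r = additive_props[of "act f", OF act_add_vec] for f

lemma poly_expand: "f = (\<Sum>\<alpha>\<in>Poly_Mapping.keys f. Poly_Mapping.single \<alpha> (Poly_Mapping.lookup f \<alpha>))"
proof (rule poly_mapping_eqI)
  fix k
  show "Poly_Mapping.lookup f k = Poly_Mapping.lookup (\<Sum>\<alpha>\<in>Poly_Mapping.keys f. Poly_Mapping.single \<alpha> (Poly_Mapping.lookup f \<alpha>)) k"
    by (cases "k \<in> Poly_Mapping.keys f") (simp_all add: lookup_sum lookup_single when_def in_keys_iff)
qed

lemma act_mult: "act (f * g) m = act f (act g m)"
proof -
  let ?F = "Poly_Mapping.keys f" and ?G = "Poly_Mapping.keys g"
  let ?f = "Poly_Mapping.lookup f" and ?g = "Poly_Mapping.lookup g"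
  have "f * g = (\<Sum>\<alpha>\<in>?F. \<Sum>\<beta>\<in>?G. Poly_Mapping.single \<alpha> (?f \<alpha>) * Poly_Mapping.single \<beta> (?g \<beta>))"
  proof -
    have "f * g = (\<Sum>\<alpha>\<in>?F. Poly_Mapping.single \<alpha> (?f \<alpha>)) * (\<Sum>\<beta>\<in>?G. Poly_Mapping.single \<beta> (?g \<beta>))"
      by (rule arg_cong2[where f="(*)"]) (rule poly_expand)+
    then show ?thesis by (simp only: sum_product)
  qed
  also have "\<dots> = (\<Sum>\<alpha>\<in>?F. \<Sum>\<beta>\<in>?G. Poly_Mapping.single (\<alpha> + \<beta>) (?f \<alpha> * ?g \<beta>))"
    by (simp add: mult_single)
  finally have fg: "f * g = \<dots>" .
  have "act (f * g) m = (\<Sum>\<alpha>\<in>?F. \<Sum>\<beta>\<in>?G. sc (?f \<alpha> * ?g \<beta>) (mon (\<alpha> + \<beta>) m))"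
    by (simp add: fg act_poly_r(4) act_single)
  also have "\<dots> = (\<Sum>\<alpha>\<in>?F. sc (?f \<alpha>) (mon \<alpha> (\<Sum>\<beta>\<in>?G. sc (?g \<beta>) (mon \<beta> m))))"
    by (simp add: mon_plus mon_r(4) sc_r(4) mon_sc sc_sc)
  also have "\<dots> = act f (act g m)" by (simp add: poly_act_def)
  finally show ?thesis .
qed

lemma act_comm: "act f (act g m) = act g (act f m)"
  by (metis act_mult mult.commute)

lemma act_one: "act 1 m = m"
  by (simp add: poly_act_def mon_zero sc_one)

lemma act_X: "i < n \<Longrightarrow> act f (X i m) = X i (act f m)"
  by (simp add: poly_act_def X_sum X_sc mon_X)

lemma act_pderiv: "act (pderiv_mp i f) m = (\<Sum>\<alpha>\<in>Poly_Mapping.keys f.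
     sc (of_nat (Poly_Mapping.lookup \<alpha> i) * Poly_Mapping.lookup f \<alpha>) (mon (\<alpha> - Poly_Mapping.single i 1) m))"
  by (simp add: pderiv_mp_def act_poly_r(4) act_single)

lemma leibniz: "i < n \<Longrightarrow> D i (act f m) = act f (D i m) + act (pderiv_mp i f) m"
proof -
  assume i: "i < n"
  have "D i (act f m) = (\<Sum>\<alpha>\<in>Poly_Mapping.keys f. sc (Poly_Mapping.lookup f \<alpha>) (D i (mon \<alpha> m)))"
    using i by (simp add: poly_act_def D_sum D_sc)
  also have "\<dots> = (\<Sum>\<alpha>\<in>Poly_Mapping.keys f. sc (Poly_Mapping.lookup f \<alpha>) (mon \<alpha> (D i m)))
     + (\<Sum>\<alpha>\<in>Poly_Mapping.keys f. sc (of_nat (Poly_Mapping.lookup \<alpha> i) * Poly_Mapping.lookup f \<alpha>) (mon (\<alpha> - Poly_Mapping.single i 1) m))"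
    using i by (simp add: D_mon sc_add sum.distrib sc_sc mult.commute)
  also have "\<dots> = act f (D i m) + act (pderiv_mp i f) m"
    unfolding act_pderiv by (simp add: poly_act_def)
  finally show ?thesis .
qed

end



lemma foldr_sum: "foldr (\<lambda>i acc. g i + acc) L a = sum_list (map g L) + a"
  by (induction L) (simp_all add: add.assoc)

lemma euler_sum: "euler n (+) 0 X D z = (\<Sum>i<n. X i (D i z))"
  unfolding euler_def foldr_sum by (simp add: sum_list_distinct_conv_sum_set atLeast0LessThan)

lemma mdeg_sum: "Poly_Mapping.keys \<alpha> \<subseteq> {..<n} \<Longrightarrow> mdeg \<alpha> = (\<Sum>i<n. Poly_Mapping.lookup \<alpha> i)"
  unfolding mdeg_def by (rule sum.mono_neutral_left) (auto simp: in_keys_iff)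

lemma pdeg_eq: "homog_poly s \<Longrightarrow> \<alpha> \<in> Poly_Mapping.keys s \<Longrightarrow> pdeg s = mdeg \<alpha>"
  unfolding homog_poly_def pdeg_def by (metis someI)

context WM begin

lemma X_mon_minus: "i < n \<Longrightarrow> sc (of_nat (Poly_Mapping.lookup \<alpha> i) * c) (X i (mon (\<alpha> - Poly_Mapping.single i 1) m))
   = sc (of_nat (Poly_Mapping.lookup \<alpha> i) * c) (mon \<alpha> m)"
proof (cases "Poly_Mapping.lookup \<alpha> i = 0")
  case True then show ?thesis by simp
next
  case False
  assume i: "i < n"
  have e: "\<alpha> = (\<alpha> - Poly_Mapping.single i 1) + Poly_Mapping.single i 1"
    using False by (intro poly_mapping_eqI) (auto simp: lookup_add lookup_minus lookup_single when_def)
  have "mon \<alpha> m = mon (\<alpha> - Poly_Mapping.single i 1) (X i m)"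
    by (subst e, simp only: mon_plus mon_single[OF i] comp_apply)
  then show ?thesis by (simp add: mon_X[OF i])
qed

lemma euler_poly: assumes R: "in_R n s" and H: "homog_poly s"
  shows "(\<Sum>i<n. X i (act (pderiv_mp i s) m)) = sc (of_nat (pdeg s)) (act s m)"
proof -
  let ?K = "Poly_Mapping.keys s" and ?s = "Poly_Mapping.lookup s"
  have "(\<Sum>i<n. X i (act (pderiv_mp i s) m)) =
     (\<Sum>i<n. \<Sum>\<alpha>\<in>?K. sc (of_nat (Poly_Mapping.lookup \<alpha> i) * ?s \<alpha>) (X i (mon (\<alpha> - Poly_Mapping.single i 1) m)))"
    by (simp add: act_pderiv X_sum X_sc)
  also have "\<dots> = (\<Sum>i<n. \<Sum>\<alpha>\<in>?K. sc (of_nat (Poly_Mapping.lookup \<alpha> i) * ?s \<alpha>) (mon \<alpha> m))"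
    by (intro sum.cong refl, rule X_mon_minus) auto
  also have "\<dots> = (\<Sum>\<alpha>\<in>?K. \<Sum>i<n. sc (of_nat (Poly_Mapping.lookup \<alpha> i) * ?s \<alpha>) (mon \<alpha> m))"
    by (rule sum.swap)
  also have "\<dots> = (\<Sum>\<alpha>\<in>?K. sc (of_nat (mdeg \<alpha>) * ?s \<alpha>) (mon \<alpha> m))"
  proof (rule sum.cong[OF refl])
    fix \<alpha> assume a: "\<alpha> \<in> ?K"
    then have "Poly_Mapping.keys \<alpha> \<subseteq> {..<n}" using R by (auto simp: in_R_def)
    then show "(\<Sum>i<n. sc (of_nat (Poly_Mapping.lookup \<alpha> i) * ?s \<alpha>) (mon \<alpha> m)) = sc (of_nat (mdeg \<alpha>) * ?s \<alpha>) (mon \<alpha> m)"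
      by (simp add: mdeg_sum sc_sum_left sum_distrib_right)
  qed
  also have "\<dots> = (\<Sum>\<alpha>\<in>?K. sc (of_nat (pdeg s)) (sc (?s \<alpha>) (mon \<alpha> m)))"
    by (rule sum.cong[OF refl]) (simp add: sc_sc pdeg_eq[OF H])
  also have "\<dots> = sc (of_nat (pdeg s)) (act s m)"
    by (simp add: poly_act_def sc_r(4))
  finally show ?thesis .
qed

abbreviation E where "E z \<equiv> euler n (+) 0 X D z"

lemma euler_act: assumes R: "in_R n s" and H: "homog_poly s"
  shows "E (act s m) = act s (E m) + sc (of_nat (pdeg s)) (act s m)"
proof -
  have "E (act s m) = (\<Sum>i<n. act s (X i (D i m))) + (\<Sum>i<n. X i (act (pderiv_mp i s) m))"
    by (simp add: euler_sum leibniz X_add act_X sum.distrib)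
  also have "\<dots> = act s (E m) + sc (of_nat (pdeg s)) (act s m)"
    by (simp add: euler_poly[OF R H] euler_sum act_vec_r(4))
  finally show ?thesis .
qed

end



locale WL = WM n sc X D for n and sc :: "'k::field_char_0 \<Rightarrow> 'm::ab_group_add \<Rightarrow> 'm" and X D +
  fixes S :: "'k::field_char_0 mpoly set"
  assumes MC: "mult_closed S"
begin

lemma one_S: "1 \<in> S" and mul_S: "s \<in> S \<Longrightarrow> t \<in> S \<Longrightarrow> s * t \<in> S"
  using MC by (auto simp: mult_closed_def)

abbreviation R where "R p q \<equiv> loc_rel n sc X S p q"
abbreviation C where "C p \<equiv> loc_class n sc X S p"

lemma act_eq_iff: "act t (x - y) = 0 \<longleftrightarrow> act t x = act t y"
  by (simp add: act_vec_r(3))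

lemma rel_iff: "R (m, s) (m', s') \<longleftrightarrow> s \<in> S \<and> s' \<in> S \<and> (\<exists>t\<in>S. act (t * s') m = act (t * s) m')"
  unfolding loc_rel_def by (simp add: act_eq_iff act_mult)

lemma relI: "s \<in> S \<Longrightarrow> s' \<in> S \<Longrightarrow> t \<in> S \<Longrightarrow> act (t * s') m = act (t * s) m' \<Longrightarrow> R (m, s) (m', s')"
  using rel_iff by blast

lemma rel_refl: "s \<in> S \<Longrightarrow> R (m, s) (m, s)"
  by (rule relI[OF _ _ one_S]) auto

lemma rel_sym: "R p q \<Longrightarrow> R q p"
  by (cases p, cases q) (simp add: rel_iff, metis)

lemma rel_trans: assumes "R p q" "R q r" shows "R p r"
proof -
  obtain m1 s1 where p: "p = (m1, s1)" by (cases p)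
  obtain m2 s2 where q: "q = (m2, s2)" by (cases q)
  obtain m3 s3 where r: "r = (m3, s3)" by (cases r)
  from assms obtain t u where S: "s1 \<in> S" "s2 \<in> S" "s3 \<in> S" "t \<in> S" "u \<in> S"
    and h1: "act (t * s2) m1 = act (t * s1) m2" and h2: "act (u * s3) m2 = act (u * s2) m3"
    unfolding p q r rel_iff by blast
  have "act (t * u * s2 * s3) m1 = act (u * s3) (act (t * s2) m1)" by (simp add: act_mult[symmetric] ac_simps)
  also have "\<dots> = act (t * s1) (act (u * s3) m2)" by (simp add: h1 act_comm)
  also have "\<dots> = act (t * s1) (act (u * s2) m3)" by (simp add: h2)
  also have "\<dots> = act (t * u * s2 * s1) m3" by (simp add: act_mult[symmetric] ac_simps)
  finally show ?thesis unfolding p r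
    by (intro relI[of _ _ "t * u * s2"]) (use S in \<open>simp_all add: mul_S mult.assoc\<close>)
qed

lemma class_eq: "R p q \<Longrightarrow> C p = C q"
  unfolding loc_class_def using rel_sym rel_trans by blast

lemma rep_rel: "snd p \<in> S \<Longrightarrow> R p (loc_rep (C p))"
proof -
  assume "snd p \<in> S"
  then have "p \<in> C p" by (cases p) (simp add: loc_class_def rel_refl)
  then have "loc_rep (C p) \<in> C p" unfolding loc_rep_def by (rule someI)
  then show ?thesis by (simp add: loc_class_def)
qed

lemma rep_obtain: assumes "s \<in> S"
  obtains m' s' where "loc_rep (C (m, s)) = (m', s')" "R (m, s) (m', s')"
  using rep_rel[of "(m, s)"] assms by (cases "loc_rep (C (m, s))") auto

lemma cong_add: assumes "R (m1, s1) (m1', s1')" "R (m2, s2) (m2', s2')"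
  shows "R (act s2 m1 + act s1 m2, s1 * s2) (act s2' m1' + act s1' m2', s1' * s2')"
proof -
  from assms obtain t1 t2 where S: "s1 \<in> S" "s2 \<in> S" "s1' \<in> S" "s2' \<in> S" "t1 \<in> S" "t2 \<in> S"
    and h1: "act (t1 * s1') m1 = act (t1 * s1) m1'" and h2: "act (t2 * s2') m2 = act (t2 * s2) m2'"
    unfolding rel_iff by blast
  have e1: "act (t1 * t2 * s1' * s2' * s2) m1 = act (t1 * t2 * s1 * s2 * s2') m1'"
  proof -
    have "act (t1 * t2 * s1' * s2' * s2) m1 = act (t2 * s2' * s2) (act (t1 * s1') m1)"
      by (simp add: act_mult[symmetric] ac_simps)
    also have "\<dots> = act (t2 * s2' * s2) (act (t1 * s1) m1')" by (simp only: h1)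
    also have "\<dots> = act (t1 * t2 * s1 * s2 * s2') m1'" by (simp add: act_mult[symmetric] ac_simps)
    finally show ?thesis .
  qed
  have e2: "act (t1 * t2 * s1' * s2' * s1) m2 = act (t1 * t2 * s1 * s2 * s1') m2'"
  proof -
    have "act (t1 * t2 * s1' * s2' * s1) m2 = act (t1 * s1' * s1) (act (t2 * s2') m2)"
      by (simp add: act_mult[symmetric] ac_simps)
    also have "\<dots> = act (t1 * s1' * s1) (act (t2 * s2) m2')" by (simp only: h2)
    also have "\<dots> = act (t1 * t2 * s1 * s2 * s1') m2'" by (simp add: act_mult[symmetric] ac_simps)
    finally show ?thesis .
  qed
  have "act (t1 * t2 * (s1' * s2')) (act s2 m1 + act s1 m2) = act (t1 * t2 * s1' * s2' * s2) m1 + act (t1 * t2 * s1' * s2' * s1) m2"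
    by (simp add: act_add_vec act_mult[symmetric] ac_simps)
  also have "\<dots> = act (t1 * t2 * s1 * s2 * s2') m1' + act (t1 * t2 * s1 * s2 * s1') m2'" by (simp add: e1 e2)
  also have "\<dots> = act (t1 * t2 * (s1 * s2)) (act s2' m1' + act s1' m2')"
    by (simp add: act_add_vec act_mult[symmetric] ac_simps)
  finally show ?thesis
    by (intro relI[of _ _ "t1 * t2"]) (use S in \<open>simp_all add: mul_S\<close>)
qed

lemma cong_sc: assumes "R (m, s) (m', s')" shows "R (sc k m, s) (sc k m', s')"
  using assms unfolding rel_iff by (metis act_sc)

lemma cong_X: assumes "R (m, s) (m', s')" "i < n" shows "R (X i m, s) (X i m', s')"
  using assms unfolding rel_iff by (metis act_X)

lemma cong_D: assumes "R (m, s) (m', s')" and i: "i < n"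
  shows "R (act s (D i m) - act (pderiv_mp i s) m, s * s) (act s' (D i m') - act (pderiv_mp i s') m', s' * s')"
proof -
  from assms obtain t where S: "s \<in> S" "s' \<in> S" "t \<in> S"
    and hu: "act (t * s') m = act (t * s) m'"
    unfolding rel_iff by blast
  define ds where "ds = pderiv_mp i s"
  define ds' where "ds' = pderiv_mp i s'"
  define dt where "dt = pderiv_mp i t"
  define u where "u = act s' m - act s m'"
  have tu: "act t u = 0" unfolding u_def act_vec_r(3) act_mult[symmetric] hu by simp
  have "D i (act t u) = 0" by (simp add: tu D_zero i)
  then have "act t (D i u) = - act dt u" by (simp add: leibniz[OF i] dt_def eq_neg_iff_add_eq_0)
  then have "act t (act t (D i u)) = - act dt (act t u)" by (simp add: act_vec_r(2) act_comm)
  then have ttDu: "act (t * t) (D i u) = 0" by (simp add: tu act_vec_r act_mult)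
  have Du: "D i u = act s' (D i m) + act ds' m - act s (D i m') - act ds m'"
    unfolding u_def by (simp add: D_diff i leibniz ds_def ds'_def)
  have h1: "act (t*t*s*s'*s') (D i m) + act (t*t*s*s'*ds') m = act (t*t*s*s*s') (D i m') + act (t*t*s*s'*ds) m'"
  proof -
    have "act (s * s') (act (t * t) (D i u)) = 0" using ttDu by (simp add: act_vec_r)
    then have "act (t*t*s*s'*s') (D i m) + act (t*t*s*s'*ds') m - act (t*t*s*s*s') (D i m') - act (t*t*s*s'*ds) m' = 0"
      unfolding Du by (simp add: act_vec_r act_add_vec act_mult[symmetric] ac_simps)
    then show ?thesis by (simp add: algebra_simps)
  qed
  have h2: "act (t*t*s*s'*ds') m = act (t*t*s*s*ds') m'"
  proof -
    have "act (t*t*s*s'*ds') m = act (t*s*ds') (act (t*s') m)" by (simp add: act_mult[symmetric] ac_simps)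
    also have "\<dots> = act (t*s*ds') (act (t*s) m')" by (simp only: hu)
    also have "\<dots> = act (t*t*s*s*ds') m'" by (simp add: act_mult[symmetric] ac_simps)
    finally show ?thesis .
  qed
  have h3: "act (t*t*s'*s'*ds) m = act (t*t*s*s'*ds) m'"
  proof -
    have "act (t*t*s'*s'*ds) m = act (t*s'*ds) (act (t*s') m)" by (simp add: act_mult[symmetric] ac_simps)
    also have "\<dots> = act (t*s'*ds) (act (t*s) m')" by (simp only: hu)
    also have "\<dots> = act (t*t*s*s'*ds) m'" by (simp add: act_mult[symmetric] ac_simps)
    finally show ?thesis .
  qed
  have "act (t * t * (s' * s')) (act s (D i m) - act ds m) = act (t*t*s*s'*s') (D i m) - act (t*t*s'*s'*ds) m"
    by (simp add: act_vec_r act_mult[symmetric] ac_simps)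
  also have "\<dots> = act (t*t*s*s*s') (D i m') - act (t*t*s*s*ds') m'"
    using h1 h2 h3 by (simp add: algebra_simps)
  also have "\<dots> = act (t * t * (s * s)) (act s' (D i m') - act ds' m')"
    by (simp add: act_vec_r act_mult[symmetric] ac_simps)
  finally show ?thesis unfolding ds_def ds'_def
    by (intro relI[of _ _ "t * t"]) (use S in \<open>simp_all add: mul_S\<close>)
qed

end



context WL begin

lemma add_C: assumes "s1 \<in> S" "s2 \<in> S"
  shows "loc_add n sc X S (C (m1, s1)) (C (m2, s2)) = C (act s2 m1 + act s1 m2, s1 * s2)"
proof -
  obtain m1' s1' where r1: "loc_rep (C (m1, s1)) = (m1', s1')" "R (m1, s1) (m1', s1')" using rep_obtain[OF assms(1)] .
  obtain m2' s2' where r2: "loc_rep (C (m2, s2)) = (m2', s2')" "R (m2, s2) (m2', s2')" using rep_obtain[OF assms(2)] .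
  show ?thesis unfolding loc_add_def r1(1) r2(1)
    by (simp, rule class_eq, rule rel_sym, rule cong_add[OF r1(2) r2(2)])
qed

lemma scale_C: assumes "s \<in> S" shows "loc_scale n sc X S k (C (m, s)) = C (sc k m, s)"
proof -
  obtain m' s' where r: "loc_rep (C (m, s)) = (m', s')" "R (m, s) (m', s')" using rep_obtain[OF assms] .
  show ?thesis unfolding loc_scale_def r(1)
    by (simp, rule class_eq, rule rel_sym, rule cong_sc[OF r(2)])
qed

lemma X_C: assumes "s \<in> S" "i < n" shows "loc_X n sc X S i (C (m, s)) = C (X i m, s)"
proof -
  obtain m' s' where r: "loc_rep (C (m, s)) = (m', s')" "R (m, s) (m', s')" using rep_obtain[OF assms(1)] .
  show ?thesis unfolding loc_X_def r(1)
    by (simp, rule class_eq, rule rel_sym, rule cong_X[OF r(2) assms(2)])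
qed

lemma D_C: assumes "s \<in> S" "i < n"
  shows "loc_D n sc X D S i (C (m, s)) = C (act s (D i m) - act (pderiv_mp i s) m, s * s)"
proof -
  obtain m' s' where r: "loc_rep (C (m, s)) = (m', s')" "R (m, s) (m', s')" using rep_obtain[OF assms(1)] .
  show ?thesis unfolding loc_D_def r(1)
    by (simp, rule class_eq, rule rel_sym, rule cong_D[OF r(2) assms(2)])
qed

lemma cancel_C: assumes "u \<in> S" "v \<in> S" shows "C (act u a, u * v) = C (a, v)"
  by (rule class_eq, rule relI[OF mul_S[OF assms] assms(2) one_S]) (simp add: act_mult act_comm)

lemma zero_C: assumes "s \<in> S" shows "loc_zero n sc X S = C (0, s)"
  unfolding loc_zero_def
  by (rule class_eq, rule relI[OF one_S assms one_S]) (simp add: act_vec_r(1))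

lemma add_same_C: assumes "s \<in> S" shows "loc_add n sc X S (C (a, s)) (C (b, s)) = C (a + b, s)"
  using assms by (simp add: add_C act_add_vec[symmetric] cancel_C)

lemma foldr_C: assumes s: "s \<in> S" and L: "set L \<subseteq> {..<n}"
  shows "foldr (\<lambda>i acc. loc_add n sc X S (loc_X n sc X S i (loc_D n sc X D S i (C (m, s)))) acc) L (loc_zero n sc X S)
    = C (sum_list (map (\<lambda>i. X i (act s (D i m) - act (pderiv_mp i s) m)) L), s * s)"
  using L
proof (induction L)
  case Nil then show ?case by (simp add: zero_C mul_S s)
next
  case (Cons x xs)
  then have x: "x < n" by auto
  show ?case using Cons by (simp add: D_C X_C x s mul_S add_same_C)
qed

abbreviation Eloc where "Eloc w \<equiv> euler n (loc_add n sc X S) (loc_zero n sc X S) (loc_X n sc X S) (loc_D n sc X D S) w"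

lemma Eloc_C: assumes s: "s \<in> S" and R: "in_R n s" and H: "homog_poly s"
  shows "Eloc (C (m, s)) = C (E m - sc (of_nat (pdeg s)) m, s)"
proof -
  have "Eloc (C (m, s)) = C (\<Sum>i<n. X i (act s (D i m) - act (pderiv_mp i s) m), s * s)"
    unfolding euler_def
    by (subst foldr_C[OF s]) (simp_all add: sum_list_distinct_conv_sum_set atLeast0LessThan)
  also have "(\<Sum>i<n. X i (act s (D i m) - act (pderiv_mp i s) m)) = act s (E m - sc (of_nat (pdeg s)) m)"
  proof -
    have e: "act s (E m) = (\<Sum>i<n. X i (act s (D i m)))" by (simp add: euler_sum act_vec_r(4) act_X)
    show ?thesis by (simp add: X_diff sum_subtractf e euler_poly[OF R H] act_vec_r(3) act_sc)
  qed
  also have "C (act s (E m - sc (of_nat (pdeg s)) m), s * s) = C (E m - sc (of_nat (pdeg s)) m, s)"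
    by (rule cancel_C[OF s s])
  finally show ?thesis .
qed

lemma step_C: assumes s: "s \<in> S" and R: "in_R n s" and H: "homog_poly s"
  shows "loc_add n sc X S (Eloc (C (m, s))) (loc_scale n sc X S (- of_int d) (C (m, s)))
     = C (E m + sc (- of_int (d + int (pdeg s))) m, s)"
proof -
  have k: "- of_int (d + int (pdeg s)) = (- of_int d) - (of_nat (pdeg s) :: 'k)" by simp
  have eq: "E m - sc (of_nat (pdeg s)) m + sc (- of_int d) m = E m + sc (- of_int (d + int (pdeg s))) m"
    unfolding k sc_diff_left by (simp add: algebra_simps)
  show ?thesis
    by (simp only: Eloc_C[OF s R H] scale_C[OF s] add_same_C[OF s] eq)
qed

lemma iter_C: assumes s: "s \<in> S" and R: "in_R n s" and H: "homog_poly s"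
  shows "((\<lambda>w. loc_add n sc X S (Eloc w) (loc_scale n sc X S (- of_int d) w)) ^^ a) (C (m, s))
     = C (((\<lambda>w. E w + sc (- of_int (d + int (pdeg s))) w) ^^ a) m, s)"
proof (induction a arbitrary: m)
  case 0 then show ?case by simp
next
  case (Suc a)
  show ?case unfolding funpow_Suc_right comp_apply step_C[OF s R H] by (rule Suc)
qed

lemma loc_main: assumes GE: "gen_eulerian n sc (+) 0 X D Hom"
  and hS: "\<forall>s\<in>S. in_R n s \<and> homog_poly s"
  shows "loc_gen_eulerian n sc X D Hom S"
  unfolding loc_gen_eulerian_def gen_eulerian_def
proof (intro allI ballI)
  fix d z assume "z \<in> loc_hom n sc X S Hom d"
  then obtain m s where z: "z = C (m, s)" and s: "s \<in> S" and m: "m \<in> Hom (d + int (pdeg s))"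
    unfolding loc_hom_def by blast
  from GE m obtain a where a: "a \<ge> 1" "((\<lambda>w. E w + sc (- of_int (d + int (pdeg s))) w) ^^ a) m = 0"
    unfolding gen_eulerian_def by blast
  have "((\<lambda>w. loc_add n sc X S (Eloc w) (loc_scale n sc X S (- of_int d) w)) ^^ a) z = loc_zero n sc X S"
    unfolding z iter_C[OF s hS[rule_format, OF s, THEN conjunct1] hS[rule_format, OF s, THEN conjunct2]] a(2)
    by (rule zero_C[OF s, symmetric])
  then show "\<exists>a\<ge>1. ((\<lambda>w. loc_add n sc X S (Eloc w) (loc_scale n sc X S (- of_int d) w)) ^^ a) z = loc_zero n sc X S"
    using a(1) by blast
qed

end



lemma in_R_mult: "in_R n f \<Longrightarrow> in_R n g \<Longrightarrow> in_R n (f * g)"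
  unfolding in_R_def using keys_mult[of f g] keys_add
  by (smt (verit, ccfv_threshold) Un_subset_iff mem_Collect_eq subset_eq)

lemma homog_mult: assumes "in_R n f" "in_R n g" "homog_poly f" "homog_poly g"
  shows "homog_poly (f * g)"
proof -
  obtain d1 where d1: "\<forall>\<alpha>\<in>Poly_Mapping.keys f. mdeg \<alpha> = d1" using assms(3) by (auto simp: homog_poly_def)
  obtain d2 where d2: "\<forall>\<alpha>\<in>Poly_Mapping.keys g. mdeg \<alpha> = d2" using assms(4) by (auto simp: homog_poly_def)
  have "\<forall>\<gamma>\<in>Poly_Mapping.keys (f * g). mdeg \<gamma> = d1 + d2"
  proof
    fix \<gamma> assume "\<gamma> \<in> Poly_Mapping.keys (f * g)"
    then obtain a b where ab: "\<gamma> = a + b" "a \<in> Poly_Mapping.keys f" "b \<in> Poly_Mapping.keys g"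
      using keys_mult[of f g] by blast
    have ka: "Poly_Mapping.keys a \<subseteq> {..<n}" and kb: "Poly_Mapping.keys b \<subseteq> {..<n}"
      using ab assms(1,2) by (auto simp: in_R_def)
    then have kab: "Poly_Mapping.keys (a + b) \<subseteq> {..<n}" using keys_add[of a b] by blast
    have "mdeg (a + b) = mdeg a + mdeg b"
      using mdeg_sum[OF kab] mdeg_sum[OF ka] mdeg_sum[OF kb] by (simp add: lookup_add sum.distrib)
    then show "mdeg \<gamma> = d1 + d2" using ab d1 d2 by simp
  qed
  then show ?thesis unfolding homog_poly_def by blast
qed

lemma in_R_one: "in_R n (1 :: 'k::semiring_1 mpoly)" by (simp add: in_R_def)
lemma homog_one: "homog_poly (1 :: 'k::semiring_1 mpoly)" by (simp add: homog_poly_def)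

lemma pow_props: assumes "in_R n f" "homog_poly f" shows "in_R n (f ^ k) \<and> homog_poly (f ^ k)"
proof (induction k)
  case 0 then show ?case by (simp add: in_R_one homog_one)
next
  case (Suc k) then show ?case using assms by (simp add: in_R_mult homog_mult)
qed

lemma WM_of_graded: assumes "graded_weyl_module n sc X D Hom" shows "WM n sc X D"
proof -
  have vs: "vector_space sc" and lin: "\<And>i. i < n \<Longrightarrow> Vector_Spaces.linear sc sc (X i) \<and> Vector_Spaces.linear sc sc (D i)"
    and c1: "\<forall>i<n. \<forall>j<n. \<forall>m. X i (X j m) = X j (X i m)"
    and c3: "\<forall>i<n. \<forall>j<n. \<forall>m. D i (X j m) - X j (D i m) = (if i = j then m else 0)"
    using assms unfolding graded_weyl_module_def by simp_all
  have mh: "\<And>i. i < n \<Longrightarrow> module_hom sc sc (X i) \<and> module_hom sc sc (D i)"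
    using lin by (simp add: module_hom_iff_linear)
  show ?thesis
  proof
    show "sc a (x + y) = sc a x + sc a y" for a x y using vector_space.vector_space_assms(1)[OF vs] .
    show "sc (a + b) x = sc a x + sc b x" for a b x using vector_space.vector_space_assms(2)[OF vs] .
    show "sc a (sc b x) = sc (a * b) x" for a b x using vector_space.vector_space_assms(3)[OF vs] .
    show "sc 1 x = x" for x using vector_space.vector_space_assms(4)[OF vs] .
    show "i < n \<Longrightarrow> X i (x + y) = X i x + X i y" for i x y using mh module_hom.add by blast
    show "i < n \<Longrightarrow> X i (sc c x) = sc c (X i x)" for i c x using mh module_hom.scale by blast
    show "i < n \<Longrightarrow> D i (x + y) = D i x + D i y" for i x y using mh module_hom.add by blast
    show "i < n \<Longrightarrow> D i (sc c x) = sc c (D i x)" for i c x using mh module_hom.scale by blast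
    show "i < n \<Longrightarrow> j < n \<Longrightarrow> X i (X j m) = X j (X i m)" for i j m using c1 by blast
    show "i < n \<Longrightarrow> j < n \<Longrightarrow> D i (X j m) - X j (D i m) = (if i = j then m else 0)" for i j m using c3 by blast
  qed
qed

theorem mainTheorem4:
  fixes n :: nat
    and sc :: "'k::field_char_0 \<Rightarrow> 'm::ab_group_add \<Rightarrow> 'm"
    and X D :: "nat \<Rightarrow> 'm \<Rightarrow> 'm"
    and Hom :: "int \<Rightarrow> 'm set"
    and S :: "'k mpoly set"
  assumes "graded_weyl_module n sc X D Hom"
    and "gen_eulerian n sc (+) 0 X D Hom"
    and "\<forall>s\<in>S. in_R n s \<and> homog_poly s"
    and "mult_closed S"
  shows "loc_gen_eulerian n sc X D Hom S \<and>
         (\<forall>f. in_R n f \<and> homog_poly f \<longrightarrow>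
               loc_gen_eulerian n sc X D Hom {f ^ k | k. True})"
proof
  have W: "WM n sc X D" by (rule WM_of_graded[OF assms(1)])
  interpret WL n sc X D S using W assms(4) by (simp add: WL_def WL_axioms_def)
  show "loc_gen_eulerian n sc X D Hom S" by (rule loc_main[OF assms(2,3)])
  show "\<forall>f. in_R n f \<and> homog_poly f \<longrightarrow> loc_gen_eulerian n sc X D Hom {f ^ k | k. True}"
  proof (intro allI impI)
    fix f :: "'k mpoly" assume f: "in_R n f \<and> homog_poly f"
    have mc: "mult_closed {f ^ k | k. True}" unfolding mult_closed_def
      by (auto, metis power_0, metis power_add)
    interpret F: WL n sc X D "{f ^ k | k. True}" using W mc by (simp add: WL_def WL_axioms_def)
    show "loc_gen_eulerian n sc X D Hom {f ^ k | k. True}"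
      by (rule F.loc_main[OF assms(2)]) (use pow_props f in auto)
  qed
qed


end
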